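(* Consider the Three-queue system (setting in the context) operating under a scheduling policy that achieves state space collapse. Let $\tilde{\boldsymbol\theta}\in\mathbb C^3$, let $\boldsymbol\theta$ be its projection onto $\mathcal S$ (real and imaginary parts projected separately), and suppose $\boldsymbol\phi\in\mathbb C^2$ is such that $\boldsymbol\theta=\mathbf B\boldsymbol\phi\in\Theta$, where $\Theta=\{\boldsymbol\theta\in\mathbb C^3:\mathrm{Re}(\boldsymbol\theta),\mathrm{Im}(\boldsymbol\theta)\in\mathcal S,\ \mathrm{Re}(\mathbf B^T\boldsymbol\theta)\le\mathbf 0\}$. Writing $\langle\tilde{\boldsymbol\theta},\mathbf q\rangle=\sum_i\tilde\theta_iq_i$, the following hold (all expectations under the stationary distribution): 1. $\lim_{\epsilon\to0}|\mathbb E[e^{\epsilon\langle\tilde{\boldsymbol\theta},\mathbf q\rangle}]|<\infty$, $\lim_{\epsilon\to0}\frac1\epsilon|\mathbb E[u_2e^{\epsilon\langle\tilde{\boldsymbol\theta},\mathbf q\rangle}]|<\infty$, $\lim_{\epsilon\to0}\frac1\epsilon|\mathbb E[u_3e^{\epsilon\langle\tilde{\boldsymbol\theta},\mathbf q\rangle}]|<\infty$, and the same holds with $\tilde{\boldsymbol\theta}$ replaced by $\boldsymbol\theta$; 2. $\lim_{\epsilon\to0}\mathbb E[e^{\epsilon\langle\tilde{\boldsymbol\theta},\mathbf q\rangle}]=\lim_{\epsilon\to0}\mathbb E[e^{\epsilon\langle\boldsymbol\theta,\mathbf q\rangle}]=\lim_{\epsilon\to0}\mathbb E[e^{\epsilon((2\phi_1+\phi_2)q_2+(\phi_1+2\phi_2)q_3)}]$;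 3. $\lim_{\epsilon\to0}\frac1\epsilon\mathbb E[u_2e^{\epsilon\langle\tilde{\boldsymbol\theta},\mathbf q\rangle}]=\lim_{\epsilon\to0}\frac1\epsilon\mathbb E[u_2e^{\epsilon\langle\boldsymbol\theta,\mathbf q\rangle}]=\lim_{\epsilon\to0}\frac1\epsilon\mathbb E[u_2e^{\epsilon(\phi_1+2\phi_2)q_3}]$; 4. $\lim_{\epsilon\to0}\frac1\epsilon\mathbb E[u_3e^{\epsilon\langle\tilde{\boldsymbol\theta},\mathbf q\rangle}]=\lim_{\epsilon\to0}\frac1\epsilon\mathbb E[u_3e^{\epsilon\langle\boldsymbol\theta,\mathbf q\rangle}]=\lim_{\epsilon\to0}\frac1\epsilon\mathbb E[u_3e^{\epsilon(2\phi_1+\phi_2)q_2}]$.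
   Context: Three-queue system: discrete time, queue vector $(q_1,q_2,q_3)$; arrivals $\mathbf a(t)\in\mathbb Z^3_{\ge0}$ i.i.d. over $t$, bounded by $a_{\max}$, mean $\boldsymbol\lambda$, diagonal covariance. Schedules $(1,0,0)$ (chosen only if $q_1>0$) and $(0,1,1)$; $\mathbf q(t+1)=[\mathbf q(t)+\mathbf a(t)-\mathbf s(t)]^+=\mathbf q(t)+\mathbf a(t)-\mathbf s(t)+\mathbf u(t)$ with unused service $\mathbf u(t)\in\{0,1\}^3$. The chain is irreducible, aperiodic, positive recurrent; $\mathbf q$ is stationary and $\mathbf u$ is the unused service in one step from stationarity. $\boldsymbol\lambda=(1-\epsilon)\boldsymbol\nu$ with $\nu_1+\nu_2=\nu_1+\nu_3=1$, $\min\nu_i>0$, $\epsilon\in(0,1)$. $\mathbf B=\begin{bmatrix}1&1\\1&0\\0&1\end{bmatrix}$, $\mathcal S=\{\mathbf y\in\mathbb R^3:y_1=y_2+y_3\}$, $\mathbf q_\perp$ the component of $\mathbf q$ orthogonal to $\mathcal S$. State space collapse: for every $\theta\in\mathbb R$ there exist $\epsilon(\theta)>0$ and $C^\star<\infty$ with $\mathbb E[e^{\epsilon\theta\|\mathbf q_\perp\|}]<C^\star$ for $0<\epsilon\le\epsilon(\theta)$, and $\mathbb E\|\mathbf q_\perp\|^r\le C_r$ for every $r\ge1$, with $C_r$ independent of $\epsilon$. *)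

theory Defs
  imports "HOL-Analysis.Analysis" "HOL-Probability.Probability"
begin

definition sched :: "bool \<Rightarrow> nat ^ 3" where
  "sched b = (if b then vector [1, 0, 0] else vector [0, 1, 1])"

text \<open>q(t+1) = [q + a - s]^+ (componentwise, truncated subtraction on nat)\<close>
definition next_state :: "nat ^ 3 \<Rightarrow> nat ^ 3 \<Rightarrow> bool \<Rightarrow> nat ^ 3" where
  "next_state q a b = (\<chi> i. (q $ i + a $ i) - sched b $ i)"

text \<open>unused service u = [q + a - s]^+ - (q + a - s) = [s - q - a]^+\<close>
definition unused :: "nat ^ 3 \<Rightarrow> nat ^ 3 \<Rightarrow> bool \<Rightarrow> nat ^ 3" where
  "unused q a b = (\<chi> i. sched b $ i - (q $ i + a $ i))"

definition kernel :: "(nat ^ 3) pmf \<Rightarrow> (nat ^ 3 \<Rightarrow> bool pmf) \<Rightarrow> nat ^ 3 \<Rightarrow> (nat ^ 3) pmf" where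
  "kernel A pol q = A \<bind> (\<lambda>a. map_pmf (next_state q a) (pol q))"

fun kernel_pow :: "(nat ^ 3) pmf \<Rightarrow> (nat ^ 3 \<Rightarrow> bool pmf) \<Rightarrow> nat \<Rightarrow> nat ^ 3 \<Rightarrow> (nat ^ 3) pmf" where
  "kernel_pow A pol 0 q = return_pmf q"
| "kernel_pow A pol (Suc n) q = kernel_pow A pol n q \<bind> kernel A pol"

definition step_dist :: "(nat ^ 3) pmf \<Rightarrow> (nat ^ 3) pmf \<Rightarrow> (nat ^ 3 \<Rightarrow> bool pmf)
    \<Rightarrow> ((nat ^ 3) \<times> (nat ^ 3) \<times> bool) pmf" where
  "step_dist \<pi> A pol = \<pi> \<bind> (\<lambda>q. A \<bind> (\<lambda>a. map_pmf (\<lambda>b. (q, a, b)) (pol q)))"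

definition S_set :: "(real ^ 3) set" where
  "S_set = {y. y $ 1 = y $ 2 + y $ 3}"

definition qvec :: "nat ^ 3 \<Rightarrow> real ^ 3" where
  "qvec q = (\<chi> i. real (q $ i))"

definition qperp :: "nat ^ 3 \<Rightarrow> real ^ 3" where
  "qperp q = qvec q - closest_point S_set (qvec q)"

definition projC :: "complex ^ 3 \<Rightarrow> complex ^ 3" where
  "projC \<theta> = (\<chi> i. Complex (closest_point S_set (\<chi> j. Re (\<theta> $ j)) $ i)
                           (closest_point S_set (\<chi> j. Im (\<theta> $ j)) $ i))"

definition Bmat :: "complex ^ 2 ^ 3" where
  "Bmat = vector [vector [1, 1], vector [1, 0], vector [0, 1]]"

definition Theta :: "(complex ^ 3) set" where
  "Theta = {\<theta>. (\<chi> i. Re (\<theta> $ i)) \<in> S_set \<and> (\<chi> i. Im (\<theta> $ i)) \<in> S_set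
              \<and> (\<forall>j. Re ((transpose Bmat *v \<theta>) $ j) \<le> 0)}"

definition cinner :: "complex ^ 3 \<Rightarrow> nat ^ 3 \<Rightarrow> complex" where
  "cinner \<theta> q = (\<Sum>i\<in>UNIV. \<theta> $ i * of_nat (q $ i))"

definition Eexp :: "(nat ^ 3) pmf \<Rightarrow> (nat ^ 3 \<Rightarrow> complex) \<Rightarrow> complex" where
  "Eexp p g = measure_pmf.expectation p (\<lambda>q. exp (g q))"

definition Eu :: "((nat ^ 3) \<times> (nat ^ 3) \<times> bool) pmf \<Rightarrow> 3 \<Rightarrow> (nat ^ 3 \<Rightarrow> complex) \<Rightarrow> complex" where
  "Eu p i g = measure_pmf.expectation p (\<lambda>(q, a, b). of_nat (unused q a b $ i) * exp (g q))"

end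

theory Submission
  imports Defs
begin


lemma S_subspace: "subspace S_set"
  unfolding subspace_def S_set_def by (auto simp: algebra_simps)

lemma cp_S: "closest_point S_set x = x - ((x$1 - x$2 - x$3)/3) *\<^sub>R (vector [1, -1, -1] :: real^3)"
proof (rule closest_point_unique[symmetric])
  show "convex S_set" by (rule subspace_imp_convex[OF S_subspace])
  show "closed S_set" by (rule closed_subspace[OF S_subspace])
  show "x - ((x$1 - x$2 - x$3)/3) *\<^sub>R (vector [1, -1, -1] :: real^3) \<in> S_set"
    by (simp add: S_set_def vector_def field_simps)
  show "\<forall>z\<in>S_set. dist x (x - ((x$1 - x$2 - x$3)/3) *\<^sub>R (vector [1, -1, -1] :: real^3)) \<le> dist x z"
  proof
    fix z assume z: "z \<in> S_set"
    let ?t = "(x$1 - x$2 - x$3)/3"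
    have z1: "z$1 = z$2 + z$3" using z by (simp add: S_set_def)
    have "(dist x z)^2 = (x$1-z$1)^2 + (x$2-z$2)^2 + (x$3-z$3)^2"
      by (simp add: dist_norm norm_vec_def L2_set_def sum_3 power2_eq_square)
    also have "\<dots> = 3*?t^2 + ((x$1-?t-z$1)^2 + (x$2+?t-z$2)^2 + (x$3+?t-z$3)^2)"
      using z1 by (simp add: power2_eq_square field_simps)
    finally have e1: "(dist x z)^2 = 3*?t^2 + ((x$1-?t-z$1)^2 + (x$2+?t-z$2)^2 + (x$3+?t-z$3)^2)" .
    have e2: "(dist x (x - ?t *\<^sub>R (vector [1, -1, -1] :: real^3)))^2 = ?t^2 + ?t^2 + ?t^2"
      by (simp add: dist_norm norm_vec_def L2_set_def sum_3 vector_def power_divide) (simp add: power2_eq_square field_simps)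
    have "(dist x (x - ?t *\<^sub>R (vector [1, -1, -1] :: real^3)))^2 \<le> (dist x z)^2"
    proof -
      have nn: "0 \<le> (x$1-?t-z$1)^2 + (x$2+?t-z$2)^2 + (x$3+?t-z$3)^2"
        by (intro add_nonneg_nonneg zero_le_power2)
      show ?thesis using e1 e2 nn by linarith
    qed
    then show "dist x (x - ?t *\<^sub>R (vector [1, -1, -1] :: real^3)) \<le> dist x z"
      using power2_le_imp_le[OF _ zero_le_dist] by blast
  qed
qed


lemma qperp_eq: "qperp q = ((real (q$1) - real (q$2) - real (q$3))/3) *\<^sub>R (vector [1, -1, -1] :: real^3)"
  unfolding qperp_def cp_S by (simp add: qvec_def)

lemma dd_le: "\<bar>real (q$1) - real (q$2) - real (q$3)\<bar> \<le> 3 * norm (qperp q)"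
proof -
  have "\<bar>qperp q $ 1\<bar> \<le> norm (qperp q)" by (rule component_le_norm_cart)
  then show ?thesis by (simp add: qperp_eq vector_def)
qed

lemma cinner_proj: "cinner \<theta> q - cinner (projC \<theta>) q
   = ((\<theta>$1 - \<theta>$2 - \<theta>$3)/3) * (of_nat (q$1) - of_nat (q$2) - of_nat (q$3))"
proof -
  define c where "c = (\<theta>$1 - \<theta>$2 - \<theta>$3)/3"
  have p: "projC \<theta> $ i = \<theta>$i - c * (vector [1, -1, -1] :: complex^3) $ i" for i
  proof -
    have "projC \<theta> $ i = Complex (closest_point S_set (\<chi> j. Re (\<theta> $ j)) $ i)
                           (closest_point S_set (\<chi> j. Im (\<theta> $ j)) $ i)"
      by (simp add: projC_def)
    then show ?thesis
      using exhaust_3[of i] by (auto simp: cp_S vector_def complex_eq_iff c_def)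
  qed
  have "cinner \<theta> q - cinner (projC \<theta>) q = c * (of_nat (q$1) - of_nat (q$2) - of_nat (q$3))"
    by (simp add: cinner_def sum_3 p vector_def algebra_simps)
  then show ?thesis by (simp add: c_def)
qed

lemma Bmat_comp: "(Bmat *v \<phi>) $ 1 = \<phi>$1 + \<phi>$2" "(Bmat *v \<phi>) $ 2 = \<phi>$1" "(Bmat *v \<phi>) $ 3 = \<phi>$2"
  by (simp_all add: Bmat_def matrix_vector_mult_def sum_2 vector_def)

lemma Theta_Re: assumes "Bmat *v \<phi> \<in> Theta"
  shows "Re (2 * \<phi>$1 + \<phi>$2) \<le> 0" "Re (\<phi>$1 + 2 * \<phi>$2) \<le> 0"
proof -
  have "\<forall>j. Re ((transpose Bmat *v (Bmat *v \<phi>)) $ j) \<le> 0" using assms by (simp add: Theta_def)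
  then have a: "Re ((transpose Bmat *v (Bmat *v \<phi>)) $ 1) \<le> 0" "Re ((transpose Bmat *v (Bmat *v \<phi>)) $ 2) \<le> 0"
    by auto
  have t: "(v v* Bmat) $ 1 = v$1 + v$2" "(v v* Bmat) $ 2 = v$1 + v$3" for v :: "complex^3"
    by (simp_all add: Bmat_def vector_matrix_mult_def sum_3 vector_def)
  show "Re (2 * \<phi>$1 + \<phi>$2) \<le> 0" "Re (\<phi>$1 + 2 * \<phi>$2) \<le> 0"
    using a by (simp_all add: t Bmat_comp)
qed

lemma exp_diff_bound:
  fixes z1 z2 :: complex
  assumes "Re z1 \<le> R" "Re z2 \<le> R"
  shows "cmod (exp z1 - exp z2) \<le> exp R * cmod (z1 - z2)"
proof (rule field_differentiable_bound[of "{z. Re z \<le> R}" exp exp])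
  show "convex {z. Re z \<le> R}" by (rule convex_halfspace_Re_le)
  show "(exp has_field_derivative exp z) (at z within {z. Re z \<le> R})" for z
    by (intro DERIV_exp has_field_derivative_at_within)
  show "cmod (exp z) \<le> exp R" if "z \<in> {z. Re z \<le> R}" for z using that by simp
qed (use assms in auto)

lemma pmf_int_bound:
  fixes f :: "'a \<Rightarrow> 'b::{banach,second_countable_topology}"
  assumes "integrable (measure_pmf M) g" "\<And>x. x \<in> set_pmf M \<Longrightarrow> norm (f x) \<le> g x"
  shows "integrable (measure_pmf M) f" "norm (measure_pmf.expectation M f) \<le> measure_pmf.expectation M g"
proof -
  have ae: "AE x in measure_pmf M. norm (f x) \<le> norm (g x)"
    using assms(2) by (intro AE_pmfI) (metis abs_ge_self order_trans real_norm_def)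
  show i: "integrable (measure_pmf M) f"
    by (rule Bochner_Integration.integrable_bound[OF assms(1) _ ae]) simp
  have "norm (measure_pmf.expectation M f) \<le> measure_pmf.expectation M (\<lambda>x. norm (f x))"
    by (rule integral_norm_bound)
  also have "\<dots> \<le> measure_pmf.expectation M g"
    using assms(2) by (intro integral_mono_AE integrable_norm i assms(1) AE_pmfI)
  finally show "norm (measure_pmf.expectation M f) \<le> measure_pmf.expectation M g" .
qed


lemma step_map_fst: "map_pmf fst (step_dist \<pi> A pol) = \<pi>"
  by (simp add: step_dist_def map_bind_pmf map_pmf_comp bind_return_pmf')

lemma step_map_a: "map_pmf (\<lambda>x. fst (snd x)) (step_dist \<pi> A pol) = A"
  by (simp add: step_dist_def map_bind_pmf map_pmf_comp bind_return_pmf')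

lemma step_map_next: "map_pmf (\<lambda>x. next_state (fst x) (fst (snd x)) (snd (snd x))) (step_dist \<pi> A pol)
   = \<pi> \<bind> kernel A pol"
  unfolding step_dist_def Defs.kernel_def[abs_def] by (simp add: map_bind_pmf map_pmf_comp)

lemma step_set: "x \<in> set_pmf (step_dist \<pi> A pol) \<Longrightarrow>
   fst x \<in> set_pmf \<pi> \<and> fst (snd x) \<in> set_pmf A \<and> snd (snd x) \<in> set_pmf (pol (fst x))"
  by (auto simp: step_dist_def)

lemma sched_comp: "sched b $ 1 = (if b then 1 else 0)" "sched b $ 2 = (if b then 0 else 1)"
  "sched b $ 3 = (if b then 0 else 1)"
  by (simp_all add: sched_def vector_def)

lemma min_lip: "\<bar>real (min (x::nat) M) - real (min y M)\<bar> \<le> \<bar>real x - real y\<bar>"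
  by (auto simp: min_def)

lemma stat_u:
  assumes stat: "\<pi> \<bind> kernel A pol = \<pi>" and bnd: "\<forall>a\<in>set_pmf A. \<forall>i. a$i \<le> amax"
  shows "measure_pmf.expectation (step_dist \<pi> A pol)
            (\<lambda>x. real (unused (fst x) (fst (snd x)) (snd (snd x)) $ i))
       = measure_pmf.expectation (step_dist \<pi> A pol) (\<lambda>x. real (sched (snd (snd x)) $ i))
         - measure_pmf.expectation A (\<lambda>a. real (a$i))"
proof -
  define X where "X = step_dist \<pi> A pol"
  define ns where "ns (x :: (nat^3) \<times> (nat^3) \<times> bool) = next_state (fst x) (fst (snd x)) (snd (snd x))" for x
  define u where "u (x :: (nat^3) \<times> (nat^3) \<times> bool) = real (unused (fst x) (fst (snd x)) (snd (snd x)) $ i)" for x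
  define s where "s (x :: (nat^3) \<times> (nat^3) \<times> bool) = real (sched (snd (snd x)) $ i)" for x
  define a where "a (x :: (nat^3) \<times> (nat^3) \<times> bool) = real (fst (snd x) $ i)" for x
  define f where "f (x :: (nat^3) \<times> (nat^3) \<times> bool) = real (ns x $ i) - real (fst x $ i)" for x
  define h where "h M (x :: (nat^3) \<times> (nat^3) \<times> bool) = real (min (ns x $ i) M) - real (min (fst x $ i) M)" for M x
  have sle: "sched b $ i \<le> 1" for b
    using exhaust_3[of i] by (auto simp: sched_comp)
  have fpt: "f x = a x - s x + u x" for x
  proof -
    have "real (fst x $ i + fst (snd x) $ i - sched (snd (snd x)) $ i) - real (fst x $ i)
        = real (fst (snd x) $ i) - real (sched (snd (snd x)) $ i)
          + real (sched (snd (snd x)) $ i - (fst x $ i + fst (snd x) $ i))"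
      by (cases "sched (snd (snd x)) $ i \<le> fst x $ i + fst (snd x) $ i") (auto simp: of_nat_diff)
    then show ?thesis
      by (simp add: f_def a_def s_def u_def ns_def next_state_def unused_def)
  qed
  have abnd: "x \<in> set_pmf X \<Longrightarrow> fst (snd x) $ i \<le> amax" for x
    using step_set[of x \<pi> A pol] bnd unfolding X_def by auto
  have hint: "measure_pmf.expectation X (h M) = 0" for M
  proof -
    have i1: "integrable (measure_pmf X) (\<lambda>x. real (min (ns x $ i) M))"
      by (rule measure_pmf.integrable_const_bound[where B="real M"]) auto
    have i2: "integrable (measure_pmf X) (\<lambda>x. real (min (fst x $ i) M))"
      by (rule measure_pmf.integrable_const_bound[where B="real M"]) auto
    have "measure_pmf.expectation X (\<lambda>x. real (min (ns x $ i) M))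
        = measure_pmf.expectation (map_pmf ns X) (\<lambda>y. real (min (y $ i) M))"
      by simp
    also have "map_pmf ns X = \<pi>" using step_map_next[of \<pi> A pol] stat
      by (simp add: X_def ns_def[abs_def])
    also have "\<pi> = map_pmf fst X" by (simp add: X_def step_map_fst)
    also have "measure_pmf.expectation (map_pmf fst X) (\<lambda>y. real (min (y $ i) M))
        = measure_pmf.expectation X (\<lambda>x. real (min (fst x $ i) M))" by simp
    finally show ?thesis
      unfolding h_def by (simp add: Bochner_Integration.integral_diff[OF i1 i2])
  qed
  have fbnd: "x \<in> set_pmf X \<Longrightarrow> \<bar>f x\<bar> \<le> real amax + 1" for x
    using fpt[of x] abnd[of x] sle[of "snd (snd x)"]
    by (simp add: a_def s_def u_def unused_def)
  have lim: "(\<lambda>M. measure_pmf.expectation X (h M)) \<longlonglongrightarrow> measure_pmf.expectation X f"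
  proof (rule integral_dominated_convergence[where w="\<lambda>_. real amax + 1"])
    show "AE x in measure_pmf X. (\<lambda>M. h M x) \<longlonglongrightarrow> f x"
    proof (rule AE_pmfI)
      fix x
      have "eventually (\<lambda>M. h M x = f x) sequentially"
        by (rule eventually_sequentiallyI[of "max (ns x $ i) (fst x $ i)"]) (auto simp: h_def f_def)
      then show "(\<lambda>M. h M x) \<longlonglongrightarrow> f x" by (rule tendsto_eventually)
    qed
    show "AE x in measure_pmf X. norm (h M x) \<le> real amax + 1" for M
    proof (rule AE_pmfI)
      fix x assume x: "x \<in> set_pmf X"
      have "\<bar>h M x\<bar> \<le> \<bar>f x\<bar>" unfolding h_def f_def by (rule min_lip)
      then show "norm (h M x) \<le> real amax + 1" using fbnd[OF x] by simp
    qed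
  qed auto
  then have f0: "measure_pmf.expectation X f = 0"
    using hint by (simp add: LIMSEQ_const_iff)
  have ia: "integrable (measure_pmf X) a"
    by (rule measure_pmf.integrable_const_bound[where B="real amax"])
       (auto intro!: AE_pmfI simp: a_def dest!: abnd)
  have isI: "integrable (measure_pmf X) s"
    by (rule measure_pmf.integrable_const_bound[where B=1]) (auto simp: s_def intro!: AE_pmfI sle[simplified])
  have iu: "integrable (measure_pmf X) u"
    by (rule measure_pmf.integrable_const_bound[where B=1]) (auto simp: u_def unused_def intro!: AE_pmfI le_trans[OF diff_le_self sle[simplified]])
  have "measure_pmf.expectation X f = measure_pmf.expectation X a - measure_pmf.expectation X s
          + measure_pmf.expectation X u"
    unfolding fpt[abs_def] using ia isI iu by simp
  moreover have "measure_pmf.expectation X a = measure_pmf.expectation A (\<lambda>a. real (a$i))"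
  proof -
    have "measure_pmf.expectation X a = measure_pmf.expectation (map_pmf (\<lambda>x. fst (snd x)) X) (\<lambda>a. real (a$i))"
      by (simp add: a_def[abs_def])
    then show ?thesis by (simp add: X_def step_map_a)
  qed
  ultimately show ?thesis using f0 unfolding X_def u_def s_def by simp
qed


lemma Eu_vals:
  assumes stat: "\<pi> \<bind> kernel A pol = \<pi>" and bnd: "\<forall>a\<in>set_pmf A. \<forall>i. a$i \<le> amax"
    and pol: "\<forall>q. True \<in> set_pmf (pol q) \<longrightarrow> q $ 1 > 0"
  shows "measure_pmf.expectation (step_dist \<pi> A pol)
            (\<lambda>x. real (unused (fst x) (fst (snd x)) (snd (snd x)) $ 2))
       = 1 - measure_pmf.expectation A (\<lambda>a. real (a$1)) - measure_pmf.expectation A (\<lambda>a. real (a$2))"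
    "measure_pmf.expectation (step_dist \<pi> A pol)
            (\<lambda>x. real (unused (fst x) (fst (snd x)) (snd (snd x)) $ 3))
       = 1 - measure_pmf.expectation A (\<lambda>a. real (a$1)) - measure_pmf.expectation A (\<lambda>a. real (a$3))"
proof -
  define X where "X = step_dist \<pi> A pol"
  have u1: "measure_pmf.expectation X (\<lambda>x. real (unused (fst x) (fst (snd x)) (snd (snd x)) $ 1)) = 0"
  proof -
    have "measure_pmf.expectation X (\<lambda>x. real (unused (fst x) (fst (snd x)) (snd (snd x)) $ 1))
        = measure_pmf.expectation X (\<lambda>x. 0)"
    proof (rule integral_cong_AE)
      show "AE x in measure_pmf X. real (unused (fst x) (fst (snd x)) (snd (snd x)) $ 1) = 0"
      proof (rule AE_pmfI)
        fix x assume "x \<in> set_pmf X"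
        then have "snd (snd x) \<in> set_pmf (pol (fst x))" using step_set unfolding X_def by blast
        then show "real (unused (fst x) (fst (snd x)) (snd (snd x)) $ 1) = 0"
          using pol by (cases "snd (snd x)") (auto simp: unused_def sched_comp)
      qed
    qed auto
    then show ?thesis by simp
  qed
  have s1: "measure_pmf.expectation X (\<lambda>x. real (sched (snd (snd x)) $ 1)) = measure_pmf.expectation A (\<lambda>a. real (a$1))"
    using stat_u[OF stat bnd, of 1] u1 unfolding X_def by simp
  have s23: "measure_pmf.expectation X (\<lambda>x. real (sched (snd (snd x)) $ j)) = 1 - measure_pmf.expectation A (\<lambda>a. real (a$1))"
    if j: "j = 2 \<or> j = 3" for j
  proof -
    have eq: "(\<lambda>x. real (sched (snd (snd x)) $ j)) = (\<lambda>x. 1 - real (sched (snd (snd x)) $ 1))"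
      using j by (auto simp: sched_comp fun_eq_iff)
    have ii: "integrable (measure_pmf X) (\<lambda>x. real (sched (snd (snd x)) $ 1))"
      by (rule measure_pmf.integrable_const_bound[where B=1]) (auto simp: sched_comp)
    have "measure_pmf.expectation X (\<lambda>x. real (sched (snd (snd x)) $ j))
       = measure_pmf.expectation X (\<lambda>x. 1 - real (sched (snd (snd x)) $ 1))"
      unfolding eq ..
    also have "\<dots> = measure_pmf.expectation X (\<lambda>x. 1) - measure_pmf.expectation X (\<lambda>x. real (sched (snd (snd x)) $ 1))"
      by (rule Bochner_Integration.integral_diff[OF _ ii]) simp
    finally show ?thesis using s1 by simp
  qed
  show "measure_pmf.expectation (step_dist \<pi> A pol)
            (\<lambda>x. real (unused (fst x) (fst (snd x)) (snd (snd x)) $ 2))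
       = 1 - measure_pmf.expectation A (\<lambda>a. real (a$1)) - measure_pmf.expectation A (\<lambda>a. real (a$2))"
    using stat_u[OF stat bnd, of 2] s23[of 2] unfolding X_def by simp
  show "measure_pmf.expectation (step_dist \<pi> A pol)
            (\<lambda>x. real (unused (fst x) (fst (snd x)) (snd (snd x)) $ 3))
       = 1 - measure_pmf.expectation A (\<lambda>a. real (a$1)) - measure_pmf.expectation A (\<lambda>a. real (a$3))"
    using stat_u[OF stat bnd, of 3] s23[of 3] unfolding X_def by simp
qed


lemma exp_pow: "exp (x::real) ^ n = exp (real n * x)"
  by (simp add: exp_of_nat_mult)

lemma rb1:
  fixes e K N :: real
  assumes "0 \<le> e" "0 \<le> K" "0 \<le> N"
  shows "N * exp (e*K*N) \<le> 1 + N^4 + exp (e*(4*K)*N)"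
proof -
  define E where "E = exp (e*K*N)"
  have E0: "0 \<le> E" by (simp add: E_def)
  have "0 \<le> (N - E)^2" by simp
  then have "2*(N*E) \<le> N^2 + E^2" by (simp add: power2_diff)
  moreover have "0 \<le> N * E" using assms E0 by simp
  ultimately have a: "N * E \<le> N^2 + E^2" by linarith
  have "0 \<le> (N^2 - 1)^2" by simp
  moreover have "(N^2)^2 = N^4" by (simp flip: power_mult)
  ultimately have "2*N^2 \<le> N^4 + 1" by (simp add: power2_diff)
  moreover have "0 \<le> N^2" by simp
  ultimately have b: "N^2 \<le> 1 + N^4" by linarith
  have "E^2 = exp (2*(e*K*N))" unfolding E_def exp_pow by simp
  also have "\<dots> \<le> exp (e*(4*K)*N)" using assms by (simp add: mult_nonneg_nonneg)
  finally show ?thesis using a b unfolding E_def by linarith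
qed

lemma rb2:
  fixes e K N d :: real
  assumes "0 \<le> e" "0 \<le> K" "0 \<le> N" "0 < d"
  shows "K * N * exp (e*K*N) \<le> 1/d + d * K^2 * (N^4 + exp (e*(4*K)*N))"
proof -
  define E where "E = exp (e*K*N)"
  define y where "y = K * N * E"
  have E0: "0 \<le> E" by (simp add: E_def)
  have "0 \<le> (d*y - 1/2)^2 + 3/4" by (simp add: add_nonneg_nonneg)
  then have "0 \<le> d^2*y^2 - d*y + 1" by (simp add: power2_eq_square algebra_simps)
  then have "d*y \<le> 1 + d*(d*y^2)" by (simp add: power2_eq_square algebra_simps)
  then have c: "y \<le> 1/d + d*y^2" using assms(4)
    by (simp add: field_simps)
  have "0 \<le> (N^2 - E^2)^2" by simp
  moreover have "(N^2)^2 = N^4" "(E^2)^2 = E^4" by (simp_all flip: power_mult)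
  ultimately have "2*(N^2 * E^2) \<le> N^4 + E^4" by (simp add: power2_diff)
  moreover have "0 \<le> N^2 * E^2" by simp
  ultimately have "N^2 * E^2 \<le> N^4 + E^4" by linarith
  moreover have "E^4 = exp (e*(4*K)*N)" unfolding E_def exp_pow by (simp add: algebra_simps)
  ultimately have "y^2 \<le> K^2 * (N^4 + exp (e*(4*K)*N))"
    unfolding y_def power_mult_distrib mult.assoc by (intro mult_left_mono) simp_all
  then have "d*y^2 \<le> d * K^2 * (N^4 + exp (e*(4*K)*N))"
    using assms(4) by (simp add: mult_left_mono mult.assoc)
  then show ?thesis using c unfolding y_def E_def by linarith
qed

lemma rb3:
  fixes x :: real assumes "0 \<le> x" shows "exp x \<le> 1 + x * exp x"
proof -
  have "1 + (-x) \<le> exp (-x)" by (rule exp_ge_add_one_self)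
  then have "(1 - x) * exp x \<le> exp (-x) * exp x" by (simp add: mult_right_mono)
  also have "\<dots> = 1" by (simp add: exp_minus_inverse mult.commute)
  finally show ?thesis by (simp add: algebra_simps)
qed


lemma pw_single:
  assumes "0 \<le> e" "0 \<le> K" "0 \<le> N" "Re g \<le> K*N"
  shows "cmod (exp (of_real e * g)) \<le> exp (e*(4*K)*N)"
proof -
  have "e * Re g \<le> e * (K*N)" using assms by (simp add: mult_left_mono)
  also have "\<dots> \<le> e*(4*K)*N" using assms by (simp add: mult_nonneg_nonneg)
  finally show ?thesis by simp
qed

lemma pw_single_u:
  assumes "0 \<le> e" "0 \<le> K" "0 \<le> N" "Re g \<le> K*N" "0 \<le> u" "u \<le> 1"
  shows "u * cmod (exp (of_real e * g)) \<le> u + e*(K*(1 + N^4 + exp (e*(4*K)*N)))"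
proof -
  have x0: "0 \<le> e*K*N" using assms by simp
  have "cmod (exp (of_real e * g)) = exp (e * Re g)" by simp
  also have "\<dots> \<le> exp (e*K*N)" using assms by (simp add: mult_left_mono mult.assoc)
  also have "\<dots> \<le> 1 + e*K*N * exp (e*K*N)" by (rule rb3[OF x0])
  finally have a: "cmod (exp (of_real e * g)) \<le> 1 + e*K*N * exp (e*K*N)" .
  have b: "N * exp (e*K*N) \<le> 1 + N^4 + exp (e*(4*K)*N)" by (rule rb1) (use assms in auto)
  have "u * cmod (exp (of_real e * g)) \<le> u * (1 + e*K*N * exp (e*K*N))"
    using a assms by (simp add: mult_left_mono)
  also have "\<dots> = u + u * (e*K*(N * exp (e*K*N)))" by (simp add: algebra_simps)
  also have "\<dots> \<le> u + e*K*(N * exp (e*K*N))"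
    using assms x0 by (intro add_left_mono mult_left_le_one_le) auto
  also have "\<dots> \<le> u + e*K*(1 + N^4 + exp (e*(4*K)*N))"
    using b assms by (intro add_left_mono mult_left_mono) auto
  finally show ?thesis by (simp add: mult.assoc)
qed

lemma pw_pair0:
  assumes "0 \<le> e" "0 \<le> K" "0 \<le> N" "Re g1 \<le> K*N" "Re g2 \<le> K*N" "cmod (g1 - g2) \<le> K*N"
  shows "cmod (exp (of_real e * g1) - exp (of_real e * g2)) \<le> e * (K * N * exp (e*K*N))"
proof -
  have r: "Re (of_real e * g) \<le> e*K*N" if "Re g \<le> K*N" for g
    using that assms by (simp add: mult_left_mono mult.assoc)
  have "cmod (exp (of_real e * g1) - exp (of_real e * g2)) \<le> exp (e*K*N) * cmod (of_real e * g1 - of_real e * g2)"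
    by (rule exp_diff_bound[OF r r]) (use assms in auto)
  also have "cmod (of_real e * g1 - of_real e * g2) = e * cmod (g1 - g2)"
    using assms by (simp add: right_diff_distrib[symmetric] norm_mult)
  also have "exp (e*K*N) * (e * cmod (g1 - g2)) \<le> exp (e*K*N) * (e * (K*N))"
    using assms by (intro mult_left_mono) auto
  finally show ?thesis by (simp add: algebra_simps)
qed

lemma pw_pair:
  assumes "0 \<le> e" "0 \<le> K" "0 \<le> N" "Re g1 \<le> K*N" "Re g2 \<le> K*N" "cmod (g1 - g2) \<le> K*N"
  shows "cmod (exp (of_real e * g1) - exp (of_real e * g2)) \<le> e * (K * (1 + N^4 + exp (e*(4*K)*N)))"
proof -
  have b: "N * exp (e*K*N) \<le> 1 + N^4 + exp (e*(4*K)*N)" by (rule rb1) (use assms in auto)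
  have c: "K * N * exp (e*K*N) \<le> K * (1 + N^4 + exp (e*(4*K)*N))"
    using mult_left_mono[OF b, of K] assms by (simp add: mult.assoc)
  have "e * (K * N * exp (e*K*N)) \<le> e * (K * (1 + N^4 + exp (e*(4*K)*N)))"
    by (rule mult_left_mono[OF c]) (use assms in simp)
  with pw_pair0[OF assms] show ?thesis by linarith
qed

lemma pw_pair_u:
  assumes "0 \<le> e" "0 \<le> K" "0 \<le> N" "Re g1 \<le> K*N" "Re g2 \<le> K*N" "cmod (g1 - g2) \<le> K*N"
    "0 \<le> u" "u \<le> 1" "0 < d"
  shows "u * cmod (exp (of_real e * g1) - exp (of_real e * g2)) \<le> e * (u/d + d*K^2*(N^4 + exp (e*(4*K)*N)))"
proof -
  have b: "K * N * exp (e*K*N) \<le> 1/d + d * K^2 * (N^4 + exp (e*(4*K)*N))" by (rule rb2) (use assms in auto)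
  have nn: "0 \<le> d * K^2 * (N^4 + exp (e*(4*K)*N))" using assms by simp
  have "u * cmod (exp (of_real e * g1) - exp (of_real e * g2)) \<le> u * (e * (K * N * exp (e*K*N)))"
    using pw_pair0[OF assms(1-6)] assms by (intro mult_left_mono) auto
  also have "\<dots> = e * (u * (K * N * exp (e*K*N)))" by (simp add: algebra_simps)
  also have "\<dots> \<le> e * (u * (1/d + d * K^2 * (N^4 + exp (e*(4*K)*N))))"
    using b assms by (intro mult_left_mono) auto
  also have "\<dots> \<le> e * (u/d + d*K^2*(N^4 + exp (e*(4*K)*N)))"
  proof -
    have "u * (d * K^2 * (N^4 + exp (e*(4*K)*N))) \<le> d * K^2 * (N^4 + exp (e*(4*K)*N))"
      using nn assms by (intro mult_left_le_one_le) auto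
    then have "u * (1/d + d * K^2 * (N^4 + exp (e*(4*K)*N))) \<le> u/d + d*K^2*(N^4 + exp (e*(4*K)*N))"
      by (simp add: algebra_simps)
    then show ?thesis using assms by (intro mult_left_mono) auto
  qed
  finally show ?thesis .
qed


lemma lift_fst:
  fixes h :: "'a \<Rightarrow> real"
  assumes "map_pmf fst X = P" "integrable (measure_pmf P) h"
  shows "integrable (measure_pmf X) (\<lambda>x. h (fst x))"
    "measure_pmf.expectation X (\<lambda>x. h (fst x)) = measure_pmf.expectation P h"
proof -
  show "integrable (measure_pmf X) (\<lambda>x. h (fst x))"
    using assms by (metis integrable_map_pmf_eq)
  show "measure_pmf.expectation X (\<lambda>x. h (fst x)) = measure_pmf.expectation P h"
    using assms(1) integral_map_pmf[of fst X h] by simp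
qed

lemma E_single:
  fixes P :: "(nat^3) pmf" and g :: "nat^3 \<Rightarrow> complex" and N :: "nat^3 \<Rightarrow> real"
  assumes "0 < e" "0 \<le> K" "\<And>q. 0 \<le> N q" "\<And>q. Re (g q) \<le> K * N q"
    "integrable (measure_pmf P) (\<lambda>q. exp (e*(4*K)*N q))"
    "measure_pmf.expectation P (\<lambda>q. exp (e*(4*K)*N q)) < C"
  shows "integrable (measure_pmf P) (\<lambda>q. exp (of_real e * g q))"
    "cmod (Eexp P (\<lambda>q. of_real e * g q)) \<le> C"
proof -
  have b: "norm (exp (of_real e * g q)) \<le> exp (e*(4*K)*N q)" for q
    using pw_single[of e K "N q" "g q"] assms by simp
  show "integrable (measure_pmf P) (\<lambda>q. exp (of_real e * g q))"
    by (rule pmf_int_bound(1)[OF assms(5) b])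
  have "cmod (Eexp P (\<lambda>q. of_real e * g q)) \<le> measure_pmf.expectation P (\<lambda>q. exp (e*(4*K)*N q))"
    unfolding Eexp_def by (rule pmf_int_bound(2)[OF assms(5) b])
  then show "cmod (Eexp P (\<lambda>q. of_real e * g q)) \<le> C" using assms(6) by linarith
qed

lemma E_pair:
  fixes P :: "(nat^3) pmf" and g1 g2 :: "nat^3 \<Rightarrow> complex" and N :: "nat^3 \<Rightarrow> real"
  assumes "0 < e" "0 \<le> K" "\<And>q. 0 \<le> N q" "\<And>q. Re (g1 q) \<le> K * N q" "\<And>q. Re (g2 q) \<le> K * N q"
    "\<And>q. cmod (g1 q - g2 q) \<le> K * N q"
    "integrable (measure_pmf P) (\<lambda>q. exp (e*(4*K)*N q))"
    "measure_pmf.expectation P (\<lambda>q. exp (e*(4*K)*N q)) < C"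
    "integrable (measure_pmf P) (\<lambda>q. N q ^ 4)"
    "measure_pmf.expectation P (\<lambda>q. N q ^ 4) \<le> C4"
  shows "cmod (Eexp P (\<lambda>q. of_real e * g1 q) - Eexp P (\<lambda>q. of_real e * g2 q)) \<le> e * (K * (1 + C4 + C))"
proof -
  note i1 = E_single(1)[of e K N g1, OF assms(1-3) assms(4) assms(7-8)]
  note i2 = E_single(1)[of e K N g2, OF assms(1-3) assms(5) assms(7-8)]
  define B where "B q = e * (K * (1 + N q ^ 4 + exp (e*(4*K)*N q)))" for q
  have iB: "integrable (measure_pmf P) B"
    unfolding B_def using assms(7,9) by simp
  have EB: "measure_pmf.expectation P B = e * (K * (1 + measure_pmf.expectation P (\<lambda>q. N q ^ 4)
              + measure_pmf.expectation P (\<lambda>q. exp (e*(4*K)*N q))))"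
    unfolding B_def using assms(7,9) by simp
  have b: "norm (exp (of_real e * g1 q) - exp (of_real e * g2 q)) \<le> B q" for q
    unfolding B_def using pw_pair[of e K "N q" "g1 q" "g2 q"] assms by simp
  have "Eexp P (\<lambda>q. of_real e * g1 q) - Eexp P (\<lambda>q. of_real e * g2 q)
      = measure_pmf.expectation P (\<lambda>q. exp (of_real e * g1 q) - exp (of_real e * g2 q))"
    unfolding Eexp_def by (rule Bochner_Integration.integral_diff[OF i1 i2, symmetric])
  also have "cmod \<dots> \<le> measure_pmf.expectation P B" by (rule pmf_int_bound(2)[OF iB b])
  also have "\<dots> \<le> e * (K * (1 + C4 + C))"
    unfolding EB using assms by (intro mult_left_mono add_mono) auto
  finally show ?thesis .
qed


lemma E_u_single:
  fixes X :: "('a \<times> 'b) pmf" and U :: "'a \<times> 'b \<Rightarrow> nat" and g :: "'a \<Rightarrow> complex" and N :: "'a \<Rightarrow> real"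
  assumes "map_pmf fst X = P" "0 < e" "0 \<le> K" "\<And>q. 0 \<le> N q" "\<And>q. Re (g q) \<le> K * N q"
    "integrable (measure_pmf P) (\<lambda>q. exp (e*(4*K)*N q))"
    "measure_pmf.expectation P (\<lambda>q. exp (e*(4*K)*N q)) < C"
    "integrable (measure_pmf P) (\<lambda>q. N q ^ 4)"
    "measure_pmf.expectation P (\<lambda>q. N q ^ 4) \<le> C4"
    "\<And>x. U x \<le> 1" "measure_pmf.expectation X (\<lambda>x. real (U x)) = e"
  shows "integrable (measure_pmf X) (\<lambda>x. of_nat (U x) * exp (of_real e * g (fst x)))"
    "cmod (measure_pmf.expectation X (\<lambda>x. of_nat (U x) * exp (of_real e * g (fst x)))) \<le> e + e * (K * (1 + C4 + C))"
proof -
  define B where "B x = real (U x) + e * (K * (1 + N (fst x) ^ 4 + exp (e*(4*K)*N (fst x))))" for x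
  have iU: "integrable (measure_pmf X) (\<lambda>x. real (U x))"
    by (rule measure_pmf.integrable_const_bound[where B=1]) (auto intro!: AE_pmfI simp: assms(10)[simplified])
  note l1 = lift_fst[OF assms(1) assms(8)]
  note l2 = lift_fst[OF assms(1) assms(6)]
  have iB: "integrable (measure_pmf X) B"
    unfolding B_def using iU l1 l2 by simp
  have EB: "measure_pmf.expectation X B = e + e * (K * (1 + measure_pmf.expectation P (\<lambda>q. N q ^ 4)
              + measure_pmf.expectation P (\<lambda>q. exp (e*(4*K)*N q))))"
    unfolding B_def using iU l1 l2 assms(11) by simp
  have b: "norm (of_nat (U x) * exp (of_real e * g (fst x))) \<le> B x" for x
  proof -
    have "norm (of_nat (U x) * exp (of_real e * g (fst x))) = real (U x) * cmod (exp (of_real e * g (fst x)))"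
      by (simp add: norm_mult)
    also have "\<dots> \<le> B x"
      unfolding B_def by (rule pw_single_u) (use assms in auto)
    finally show ?thesis .
  qed
  show "integrable (measure_pmf X) (\<lambda>x. of_nat (U x) * exp (of_real e * g (fst x)))"
    by (rule pmf_int_bound(1)[OF iB b])
  have "cmod (measure_pmf.expectation X (\<lambda>x. of_nat (U x) * exp (of_real e * g (fst x)))) \<le> measure_pmf.expectation X B"
    by (rule pmf_int_bound(2)[OF iB b])
  also have "\<dots> \<le> e + e * (K * (1 + C4 + C))"
    unfolding EB using assms by (intro add_left_mono mult_left_mono add_mono) auto
  finally show "cmod (measure_pmf.expectation X (\<lambda>x. of_nat (U x) * exp (of_real e * g (fst x)))) \<le> e + e * (K * (1 + C4 + C))" .
qed

lemma E_u_pair: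
  fixes X :: "('a \<times> 'b) pmf" and U :: "'a \<times> 'b \<Rightarrow> nat" and g1 g2 :: "'a \<Rightarrow> complex" and N :: "'a \<Rightarrow> real"
  assumes "map_pmf fst X = P" "0 < e" "0 \<le> K" "\<And>q. 0 \<le> N q" "\<And>q. Re (g1 q) \<le> K * N q"
    "\<And>q. Re (g2 q) \<le> K * N q"
    "\<And>x. U x \<noteq> 0 \<Longrightarrow> cmod (g1 (fst x) - g2 (fst x)) \<le> K * N (fst x)"
    "integrable (measure_pmf P) (\<lambda>q. exp (e*(4*K)*N q))"
    "measure_pmf.expectation P (\<lambda>q. exp (e*(4*K)*N q)) < C"
    "integrable (measure_pmf P) (\<lambda>q. N q ^ 4)"
    "measure_pmf.expectation P (\<lambda>q. N q ^ 4) \<le> C4"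
    "\<And>x. U x \<le> 1" "measure_pmf.expectation X (\<lambda>x. real (U x)) = e"
  shows "cmod (measure_pmf.expectation X (\<lambda>x. of_nat (U x) * exp (of_real e * g1 (fst x)))
             - measure_pmf.expectation X (\<lambda>x. of_nat (U x) * exp (of_real e * g2 (fst x))))
         \<le> e * (sqrt e * (1 + K^2 * (C4 + C)))"
proof -
  note i1 = E_u_single(1)[of X P e K N g1 C C4 U, OF assms(1-5) assms(8-13)]
  note i2 = E_u_single(1)[of X P e K N g2 C C4 U, OF assms(1-4) assms(6) assms(8-13)]
  define d where "d = sqrt e"
  have d0: "0 < d" using assms(2) by (simp add: d_def)
  define B where "B x = e * (real (U x)/d + d*K^2*(N (fst x)^4 + exp (e*(4*K)*N (fst x))))" for x
  have iU: "integrable (measure_pmf X) (\<lambda>x. real (U x))"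
    by (rule measure_pmf.integrable_const_bound[where B=1]) (auto intro!: AE_pmfI simp: assms(12)[simplified])
  note l1 = lift_fst[OF assms(1) assms(10)]
  note l2 = lift_fst[OF assms(1) assms(8)]
  have iB: "integrable (measure_pmf X) B"
    unfolding B_def using iU l1 l2 by simp
  have EB: "measure_pmf.expectation X B = e * (e/d + d*K^2*(measure_pmf.expectation P (\<lambda>q. N q ^ 4)
              + measure_pmf.expectation P (\<lambda>q. exp (e*(4*K)*N q))))"
    unfolding B_def using iU l1 l2 assms(13) by simp
  have b: "norm (of_nat (U x) * exp (of_real e * g1 (fst x)) - of_nat (U x) * exp (of_real e * g2 (fst x))) \<le> B x" for x
  proof (cases "U x = 0")
    case True
    then show ?thesis unfolding B_def using assms d0 by (simp add: add_nonneg_nonneg)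
  next
    case False
    have "norm (of_nat (U x) * exp (of_real e * g1 (fst x)) - of_nat (U x) * exp (of_real e * g2 (fst x)))
       = real (U x) * cmod (exp (of_real e * g1 (fst x)) - exp (of_real e * g2 (fst x)))"
      by (simp add: norm_mult right_diff_distrib[symmetric])
    also have "\<dots> \<le> B x"
      unfolding B_def by (rule pw_pair_u) (use assms False d0 in auto)
    finally show ?thesis .
  qed
  have "measure_pmf.expectation X (\<lambda>x. of_nat (U x) * exp (of_real e * g1 (fst x)))
             - measure_pmf.expectation X (\<lambda>x. of_nat (U x) * exp (of_real e * g2 (fst x)))
     = measure_pmf.expectation X (\<lambda>x. of_nat (U x) * exp (of_real e * g1 (fst x)) - of_nat (U x) * exp (of_real e * g2 (fst x)))"
    by (rule Bochner_Integration.integral_diff[OF i1 i2, symmetric])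
  also have "cmod \<dots> \<le> measure_pmf.expectation X B" by (rule pmf_int_bound(2)[OF iB b])
  also have "\<dots> \<le> e * (e/d + d*K^2*(C4 + C))"
    unfolding EB using assms d0 by (intro mult_left_mono add_left_mono add_mono) auto
  also have "e/d = d" using assms(2) unfolding d_def by (simp add: real_div_sqrt)
  also have "e * (d + d*K^2*(C4 + C)) = e * (sqrt e * (1 + K^2 * (C4 + C)))"
    unfolding d_def by (simp add: algebra_simps)
  finally show ?thesis .
qed



theorem lemma5:
  fixes \<nu> :: "real ^ 3" and amax :: nat
    and A :: "real \<Rightarrow> (nat ^ 3) pmf"
    and pol :: "nat ^ 3 \<Rightarrow> bool pmf"
    and \<pi> :: "real \<Rightarrow> (nat ^ 3) pmf"
    and \<theta>t :: "complex ^ 3" and \<phi> :: "complex ^ 2"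
  assumes nu: "\<nu> $ 1 + \<nu> $ 2 = 1" "\<nu> $ 1 + \<nu> $ 3 = 1" "\<forall>i. \<nu> $ i > 0"
    and pol: "\<forall>q. True \<in> set_pmf (pol q) \<longrightarrow> q $ 1 > 0"
    and arr_bound: "\<forall>\<epsilon>\<in>{0<..<1}. \<forall>a\<in>set_pmf (A \<epsilon>). \<forall>i. a $ i \<le> amax"
    and arr_mean: "\<forall>\<epsilon>\<in>{0<..<1}. \<forall>i.
        measure_pmf.expectation (A \<epsilon>) (\<lambda>a. real (a $ i)) = (1 - \<epsilon>) * \<nu> $ i"
    and arr_cov: "\<forall>\<epsilon>\<in>{0<..<1}. \<forall>i j. i \<noteq> j \<longrightarrow>
        measure_pmf.expectation (A \<epsilon>) (\<lambda>a. real (a $ i) * real (a $ j))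
        = measure_pmf.expectation (A \<epsilon>) (\<lambda>a. real (a $ i))
          * measure_pmf.expectation (A \<epsilon>) (\<lambda>a. real (a $ j))"
    and stationary: "\<forall>\<epsilon>\<in>{0<..<1}. \<pi> \<epsilon> \<bind> kernel (A \<epsilon>) pol = \<pi> \<epsilon>"
    and irreducible: "\<forall>\<epsilon>\<in>{0<..<1}. \<forall>x\<in>set_pmf (\<pi> \<epsilon>). \<forall>y\<in>set_pmf (\<pi> \<epsilon>).
        \<exists>n. y \<in> set_pmf (kernel_pow (A \<epsilon>) pol n x)"
    and aperiodic: "\<forall>\<epsilon>\<in>{0<..<1}. \<forall>x\<in>set_pmf (\<pi> \<epsilon>).
        Gcd {n. n > 0 \<and> x \<in> set_pmf (kernel_pow (A \<epsilon>) pol n x)} = 1"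
    and ssc_exp: "\<forall>\<theta>::real. \<exists>\<epsilon>0>0. \<exists>C. \<forall>\<epsilon>. 0 < \<epsilon> \<and> \<epsilon> \<le> \<epsilon>0 \<and> \<epsilon> < 1 \<longrightarrow>
        integrable (measure_pmf (\<pi> \<epsilon>)) (\<lambda>q. exp (\<epsilon> * \<theta> * norm (qperp q)))
        \<and> measure_pmf.expectation (\<pi> \<epsilon>) (\<lambda>q. exp (\<epsilon> * \<theta> * norm (qperp q))) < C"
    and ssc_mom: "\<forall>r::real. r \<ge> 1 \<longrightarrow> (\<exists>C. \<forall>\<epsilon>\<in>{0<..<1}.
        integrable (measure_pmf (\<pi> \<epsilon>)) (\<lambda>q. norm (qperp q) powr r)
        \<and> measure_pmf.expectation (\<pi> \<epsilon>) (\<lambda>q. norm (qperp q) powr r) \<le> C)"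
    and theta: "projC \<theta>t = Bmat *v \<phi>" "Bmat *v \<phi> \<in> Theta"
  shows
    "(\<forall>\<theta>\<in>{\<theta>t, projC \<theta>t}.
        eventually (\<lambda>\<epsilon>. integrable (measure_pmf (\<pi> \<epsilon>)) (\<lambda>q. exp (of_real \<epsilon> * cinner \<theta> q)))
          (at_right 0)
      \<and> (\<exists>C. eventually (\<lambda>\<epsilon>.
             cmod (Eexp (\<pi> \<epsilon>) (\<lambda>q. of_real \<epsilon> * cinner \<theta> q)) \<le> C
           \<and> cmod (Eu (step_dist (\<pi> \<epsilon>) (A \<epsilon>) pol) 2 (\<lambda>q. of_real \<epsilon> * cinner \<theta> q)) / \<epsilon> \<le> C
           \<and> cmod (Eu (step_dist (\<pi> \<epsilon>) (A \<epsilon>) pol) 3 (\<lambda>q. of_real \<epsilon> * cinner \<theta> q)) / \<epsilon> \<le> C)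
          (at_right 0)))
   \<and> (((\<lambda>\<epsilon>. Eexp (\<pi> \<epsilon>) (\<lambda>q. of_real \<epsilon> * cinner \<theta>t q)
           - Eexp (\<pi> \<epsilon>) (\<lambda>q. of_real \<epsilon> * cinner (projC \<theta>t) q)) \<longlongrightarrow> 0) (at_right 0))
   \<and> (((\<lambda>\<epsilon>. Eexp (\<pi> \<epsilon>) (\<lambda>q. of_real \<epsilon> * cinner (projC \<theta>t) q)
           - Eexp (\<pi> \<epsilon>) (\<lambda>q. of_real \<epsilon> * ((2 * \<phi> $ 1 + \<phi> $ 2) * of_nat (q $ 2)
                                       + (\<phi> $ 1 + 2 * \<phi> $ 2) * of_nat (q $ 3))))
       \<longlongrightarrow> 0) (at_right 0))
   \<and> (((\<lambda>\<epsilon>. (Eu (step_dist (\<pi> \<epsilon>) (A \<epsilon>) pol) 2 (\<lambda>q. of_real \<epsilon> * cinner \<theta>t q)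
            - Eu (step_dist (\<pi> \<epsilon>) (A \<epsilon>) pol) 2 (\<lambda>q. of_real \<epsilon> * cinner (projC \<theta>t) q)) / of_real \<epsilon>)
       \<longlongrightarrow> 0) (at_right 0))
   \<and> (((\<lambda>\<epsilon>. (Eu (step_dist (\<pi> \<epsilon>) (A \<epsilon>) pol) 2 (\<lambda>q. of_real \<epsilon> * cinner (projC \<theta>t) q)
            - Eu (step_dist (\<pi> \<epsilon>) (A \<epsilon>) pol) 2
                (\<lambda>q. of_real \<epsilon> * (\<phi> $ 1 + 2 * \<phi> $ 2) * of_nat (q $ 3))) / of_real \<epsilon>)
       \<longlongrightarrow> 0) (at_right 0))
   \<and> (((\<lambda>\<epsilon>. (Eu (step_dist (\<pi> \<epsilon>) (A \<epsilon>) pol) 3 (\<lambda>q. of_real \<epsilon> * cinner \<theta>t q)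
            - Eu (step_dist (\<pi> \<epsilon>) (A \<epsilon>) pol) 3 (\<lambda>q. of_real \<epsilon> * cinner (projC \<theta>t) q)) / of_real \<epsilon>)
       \<longlongrightarrow> 0) (at_right 0))
   \<and> (((\<lambda>\<epsilon>. (Eu (step_dist (\<pi> \<epsilon>) (A \<epsilon>) pol) 3 (\<lambda>q. of_real \<epsilon> * cinner (projC \<theta>t) q)
            - Eu (step_dist (\<pi> \<epsilon>) (A \<epsilon>) pol) 3
                (\<lambda>q. of_real \<epsilon> * (2 * \<phi> $ 1 + \<phi> $ 2) * of_nat (q $ 2))) / of_real \<epsilon>)
       \<longlongrightarrow> 0) (at_right 0))"
  proof -
  define c where "c = (\<theta>t$1 - \<theta>t$2 - \<theta>t$3)/3"
  define K where "K = 3 * (cmod (\<phi>$1 + \<phi>$2) + cmod c)"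
  define N where "N q = norm (qperp q)" for q :: "nat^3"
  define dd where "dd q = real (q$1) - real (q$2) - real (q$3)" for q :: "nat^3"
  have K0: "0 \<le> K" unfolding K_def by simp
  have N0: "0 \<le> N q" for q unfolding N_def by simp
  have ddN: "\<bar>dd q\<bar> \<le> 3 * N q" for q unfolding dd_def N_def by (rule dd_le)
  have ct: "cinner \<theta>t q = cinner (projC \<theta>t) q + c * of_real (dd q)" for q
  proof -
    have h: "cinner \<theta>t q - cinner (projC \<theta>t) q = c * of_real (dd q)"
      using cinner_proj[of \<theta>t q] unfolding c_def[symmetric] by (simp add: dd_def)
    show ?thesis by (metis h diff_add_cancel add.commute)
  qed
  have cp: "cinner (projC \<theta>t) q = ((2 * \<phi>$1 + \<phi>$2) * of_nat (q$2) + (\<phi>$1 + 2 * \<phi>$2) * of_nat (q$3))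
              + (\<phi>$1 + \<phi>$2) * of_real (dd q)" for q
    unfolding theta(1) by (simp add: cinner_def sum_3 Bmat_comp dd_def algebra_simps)
  note ReAB = Theta_Re[OF theta(2)]
  have re2: "Re ((\<phi>$1 + 2 * \<phi>$2) * of_nat (q$3)) \<le> 0" for q
    using ReAB(2) by (simp add: mult_nonpos_nonneg)
  have re3: "Re ((2 * \<phi>$1 + \<phi>$2) * of_nat (q$2)) \<le> 0" for q
    using ReAB(1) by (simp add: mult_nonpos_nonneg)
  have reP: "Re ((2 * \<phi>$1 + \<phi>$2) * of_nat (q$2) + (\<phi>$1 + 2 * \<phi>$2) * of_nat (q$3)) \<le> 0" for q
    using re2[of q] re3[of q] by simp
  have cgc: "cmod ((\<phi>$1 + \<phi>$2) * of_real (dd q)) + cmod (c * of_real (dd q)) \<le> K * N q" for q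
  proof -
    have "cmod ((\<phi>$1 + \<phi>$2) * of_real (dd q)) + cmod (c * of_real (dd q))
        = (cmod (\<phi>$1 + \<phi>$2) + cmod c) * \<bar>dd q\<bar>" by (simp only: norm_mult norm_of_real) (simp add: algebra_simps)
    also have "\<dots> \<le> (cmod (\<phi>$1 + \<phi>$2) + cmod c) * (3 * N q)"
      by (intro mult_left_mono ddN) simp
    also have "\<dots> = K * N q" unfolding K_def by (simp add: algebra_simps)
    finally show ?thesis .
  qed
  have cg: "cmod ((\<phi>$1 + \<phi>$2) * of_real (dd q)) \<le> K * N q" for q
    using cgc[of q] by (smt (verit) norm_ge_zero)
  have cc: "cmod (c * of_real (dd q)) \<le> K * N q" for q
    using cgc[of q] by (smt (verit) norm_ge_zero)
  have Rp: "Re (cinner (projC \<theta>t) q) \<le> K * N q" for q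
    using reP[of q] cg[of q] complex_Re_le_cmod[of "(\<phi>$1 + \<phi>$2) * of_real (dd q)"]
    unfolding cp by simp
  have Rt: "Re (cinner \<theta>t q) \<le> K * N q" for q
    using reP[of q] cgc[of q] complex_Re_le_cmod[of "(\<phi>$1 + \<phi>$2) * of_real (dd q)"]
      complex_Re_le_cmod[of "c * of_real (dd q)"]
    unfolding ct cp by simp
  have RP: "Re ((2 * \<phi>$1 + \<phi>$2) * of_nat (q$2) + (\<phi>$1 + 2 * \<phi>$2) * of_nat (q$3)) \<le> K * N q" for q
    using reP[of q] K0 N0[of q] by (smt (verit) mult_nonneg_nonneg)
  have R2: "Re ((\<phi>$1 + 2 * \<phi>$2) * of_nat (q$3)) \<le> K * N q" for q
    using re2[of q] K0 N0[of q] by (smt (verit) mult_nonneg_nonneg)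
  have R3: "Re ((2 * \<phi>$1 + \<phi>$2) * of_nat (q$2)) \<le> K * N q" for q
    using re3[of q] K0 N0[of q] by (smt (verit) mult_nonneg_nonneg)
  have D1: "cmod (cinner \<theta>t q - cinner (projC \<theta>t) q) \<le> K * N q" for q
    using cc[of q] unfolding ct by simp
  have D2: "cmod (cinner (projC \<theta>t) q - ((2 * \<phi>$1 + \<phi>$2) * of_nat (q$2) + (\<phi>$1 + 2 * \<phi>$2) * of_nat (q$3))) \<le> K * N q" for q
    using cg[of q] unfolding cp by simp
  have D3: "q$2 = 0 \<Longrightarrow> cmod (cinner (projC \<theta>t) q - (\<phi>$1 + 2 * \<phi>$2) * of_nat (q$3)) \<le> K * N q" for q
    using cg[of q] unfolding cp by simp
  have D4: "q$3 = 0 \<Longrightarrow> cmod (cinner (projC \<theta>t) q - (2 * \<phi>$1 + \<phi>$2) * of_nat (q$2)) \<le> K * N q" for q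
    using cg[of q] unfolding cp by simp
  define U where "U i x = unused (fst x) (fst (snd x)) (snd (snd x)) $ i" for i and x :: "(nat^3) \<times> (nat^3) \<times> bool"
  have Ule: "U i x \<le> 1" for i x
    using exhaust_3[of i] by (auto simp: U_def unused_def sched_comp)
  have U2: "U 2 x \<noteq> 0 \<Longrightarrow> fst x $ 2 = 0" for x
    by (cases "snd (snd x)") (auto simp: U_def unused_def sched_comp)
  have U3: "U 3 x \<noteq> 0 \<Longrightarrow> fst x $ 3 = 0" for x
    by (cases "snd (snd x)") (auto simp: U_def unused_def sched_comp)
  have Eu_alt: "Eu p i g = measure_pmf.expectation p (\<lambda>x. of_nat (U i x) * exp (g (fst x)))" for p i g
    unfolding Eu_def U_def by (intro Bochner_Integration.integral_cong refl) (auto split: prod.splits)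
  obtain \<epsilon>0 C where e0: "\<epsilon>0 > 0" and hC: "\<forall>\<epsilon>. 0 < \<epsilon> \<and> \<epsilon> \<le> \<epsilon>0 \<and> \<epsilon> < 1 \<longrightarrow>
        integrable (measure_pmf (\<pi> \<epsilon>)) (\<lambda>q. exp (\<epsilon> * (4*K) * norm (qperp q)))
        \<and> measure_pmf.expectation (\<pi> \<epsilon>) (\<lambda>q. exp (\<epsilon> * (4*K) * norm (qperp q))) < C"
    using ssc_exp by blast
  obtain C4 where hC4: "\<forall>\<epsilon>\<in>{0<..<1}.
        integrable (measure_pmf (\<pi> \<epsilon>)) (\<lambda>q. norm (qperp q) powr 4)
        \<and> measure_pmf.expectation (\<pi> \<epsilon>) (\<lambda>q. norm (qperp q) powr 4) \<le> C4"
    using ssc_mom by (metis (no_types) one_le_numeral)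
  define \<epsilon>1 where "\<epsilon>1 = min \<epsilon>0 1"
  have e1: "0 < \<epsilon>1" unfolding \<epsilon>1_def using e0 by simp
  have facts: "integrable (measure_pmf (\<pi> \<epsilon>)) (\<lambda>q. exp (\<epsilon>*(4*K)*N q))
      \<and> measure_pmf.expectation (\<pi> \<epsilon>) (\<lambda>q. exp (\<epsilon>*(4*K)*N q)) < C
      \<and> integrable (measure_pmf (\<pi> \<epsilon>)) (\<lambda>q. N q ^ 4)
      \<and> measure_pmf.expectation (\<pi> \<epsilon>) (\<lambda>q. N q ^ 4) \<le> C4
      \<and> map_pmf fst (step_dist (\<pi> \<epsilon>) (A \<epsilon>) pol) = \<pi> \<epsilon>
      \<and> measure_pmf.expectation (step_dist (\<pi> \<epsilon>) (A \<epsilon>) pol) (\<lambda>x. real (U 2 x)) = \<epsilon>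
      \<and> measure_pmf.expectation (step_dist (\<pi> \<epsilon>) (A \<epsilon>) pol) (\<lambda>x. real (U 3 x)) = \<epsilon>"
    if "0 < \<epsilon>" "\<epsilon> < \<epsilon>1" for \<epsilon>
  proof -
    have eI: "\<epsilon> \<in> {0<..<1}" "\<epsilon> \<le> \<epsilon>0" using that unfolding \<epsilon>1_def by auto
    have a: "integrable (measure_pmf (\<pi> \<epsilon>)) (\<lambda>q. exp (\<epsilon>*(4*K)*N q))
      \<and> measure_pmf.expectation (\<pi> \<epsilon>) (\<lambda>q. exp (\<epsilon>*(4*K)*N q)) < C"
      using hC eI unfolding N_def by auto
    have pw: "(\<lambda>q. norm (qperp q) powr 4) = (\<lambda>q. N q ^ 4)"
      unfolding N_def by (simp add: fun_eq_iff)
    have b: "integrable (measure_pmf (\<pi> \<epsilon>)) (\<lambda>q. N q ^ 4)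
      \<and> measure_pmf.expectation (\<pi> \<epsilon>) (\<lambda>q. N q ^ 4) \<le> C4"
      using hC4 eI unfolding pw by blast
    have st: "\<pi> \<epsilon> \<bind> kernel (A \<epsilon>) pol = \<pi> \<epsilon>" using stationary eI by blast
    have bd: "\<forall>a\<in>set_pmf (A \<epsilon>). \<forall>i. a$i \<le> amax" using arr_bound eI by blast
    have m: "measure_pmf.expectation (A \<epsilon>) (\<lambda>a. real (a $ i)) = (1 - \<epsilon>) * \<nu> $ i" for i
      using arr_mean eI by blast
    note ev = Eu_vals[OF st bd pol]
    have u2: "measure_pmf.expectation (step_dist (\<pi> \<epsilon>) (A \<epsilon>) pol) (\<lambda>x. real (U 2 x)) = \<epsilon>"
      using ev(1) unfolding U_def m using nu(1) by (simp add: algebra_simps)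
        (metis add.commute distrib_left mult.right_neutral)
    have u3: "measure_pmf.expectation (step_dist (\<pi> \<epsilon>) (A \<epsilon>) pol) (\<lambda>x. real (U 3 x)) = \<epsilon>"
      using ev(2) unfolding U_def m using nu(2) by (simp add: algebra_simps)
        (metis add.commute distrib_left mult.right_neutral)
    show ?thesis using a b u2 u3 step_map_fst by blast
  qed
  have ev_from: "eventually P (at_right 0)" if "\<And>\<epsilon>. 0 < \<epsilon> \<Longrightarrow> \<epsilon> < \<epsilon>1 \<Longrightarrow> P \<epsilon>" for P :: "real \<Rightarrow> bool"
    unfolding eventually_at_right_field using e1 that by blast
  have lim_lin: "(f \<longlongrightarrow> 0) (at_right 0)"
    if "\<And>\<epsilon>. 0 < \<epsilon> \<Longrightarrow> \<epsilon> < \<epsilon>1 \<Longrightarrow> norm (f \<epsilon>) \<le> \<epsilon> * M" for f :: "real \<Rightarrow> complex" and M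
  proof (rule Lim_null_comparison)
    show "eventually (\<lambda>\<epsilon>. norm (f \<epsilon>) \<le> \<epsilon> * M) (at_right 0)" by (rule ev_from) (rule that)
    have "((\<lambda>\<epsilon>::real. \<epsilon> * M) \<longlongrightarrow> 0 * M) (at_right 0)" by (intro tendsto_intros)
    then show "((\<lambda>\<epsilon>::real. \<epsilon> * M) \<longlongrightarrow> 0) (at_right 0)" by simp
  qed
  have lim_sqrt: "(f \<longlongrightarrow> 0) (at_right 0)"
    if "\<And>\<epsilon>. 0 < \<epsilon> \<Longrightarrow> \<epsilon> < \<epsilon>1 \<Longrightarrow> norm (f \<epsilon>) \<le> sqrt \<epsilon> * M" for f :: "real \<Rightarrow> complex" and M
  proof (rule Lim_null_comparison)
    show "eventually (\<lambda>\<epsilon>. norm (f \<epsilon>) \<le> sqrt \<epsilon> * M) (at_right 0)" by (rule ev_from) (rule that)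
    have "((\<lambda>\<epsilon>::real. sqrt \<epsilon> * M) \<longlongrightarrow> sqrt 0 * M) (at_right 0)" by (intro tendsto_intros)
    then show "((\<lambda>\<epsilon>::real. sqrt \<epsilon> * M) \<longlongrightarrow> 0) (at_right 0)" by simp
  qed
  have div_eps: "norm (z / of_real \<epsilon>) \<le> sqrt \<epsilon> * M" if "0 < \<epsilon>" "cmod z \<le> \<epsilon> * (sqrt \<epsilon> * M)"
    for z :: complex and \<epsilon> M
    using that by (simp add: norm_divide field_simps)
  define M0 where "M0 = K * (1 + C4 + C)"
  define M1 where "M1 = 1 + K^2 * (C4 + C)"
  have part1: "eventually (\<lambda>\<epsilon>. integrable (measure_pmf (\<pi> \<epsilon>)) (\<lambda>q. exp (of_real \<epsilon> * cinner \<theta> q))) (at_right 0)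
      \<and> (\<exists>C. eventually (\<lambda>\<epsilon>.
             cmod (Eexp (\<pi> \<epsilon>) (\<lambda>q. of_real \<epsilon> * cinner \<theta> q)) \<le> C
           \<and> cmod (Eu (step_dist (\<pi> \<epsilon>) (A \<epsilon>) pol) 2 (\<lambda>q. of_real \<epsilon> * cinner \<theta> q)) / \<epsilon> \<le> C
           \<and> cmod (Eu (step_dist (\<pi> \<epsilon>) (A \<epsilon>) pol) 3 (\<lambda>q. of_real \<epsilon> * cinner \<theta> q)) / \<epsilon> \<le> C)
          (at_right 0))"
    if R: "\<And>q. Re (cinner \<theta> q) \<le> K * N q" for \<theta>
  proof
    show "eventually (\<lambda>\<epsilon>. integrable (measure_pmf (\<pi> \<epsilon>)) (\<lambda>q. exp (of_real \<epsilon> * cinner \<theta> q))) (at_right 0)"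
    proof (rule ev_from)
      fix \<epsilon> :: real assume "0 < \<epsilon>" "\<epsilon> < \<epsilon>1"
      with facts[OF this] show "integrable (measure_pmf (\<pi> \<epsilon>)) (\<lambda>q. exp (of_real \<epsilon> * cinner \<theta> q))"
        using E_single(1)[of \<epsilon> K N "cinner \<theta>" "\<pi> \<epsilon>" C] K0 N0 R by blast
    qed
    show "\<exists>C. eventually (\<lambda>\<epsilon>.
             cmod (Eexp (\<pi> \<epsilon>) (\<lambda>q. of_real \<epsilon> * cinner \<theta> q)) \<le> C
           \<and> cmod (Eu (step_dist (\<pi> \<epsilon>) (A \<epsilon>) pol) 2 (\<lambda>q. of_real \<epsilon> * cinner \<theta> q)) / \<epsilon> \<le> C
           \<and> cmod (Eu (step_dist (\<pi> \<epsilon>) (A \<epsilon>) pol) 3 (\<lambda>q. of_real \<epsilon> * cinner \<theta> q)) / \<epsilon> \<le> C)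
          (at_right 0)"
    proof (intro exI[of _ "max C (1 + M0)"] ev_from conjI)
      fix \<epsilon> :: real assume ep: "0 < \<epsilon>" "\<epsilon> < \<epsilon>1"
      note f = facts[OF ep]
      show "cmod (Eexp (\<pi> \<epsilon>) (\<lambda>q. of_real \<epsilon> * cinner \<theta> q)) \<le> max C (1 + M0)"
        using E_single(2)[of \<epsilon> K N "cinner \<theta>" "\<pi> \<epsilon>" C] f ep K0 N0 R by force
      have b: "cmod (Eu (step_dist (\<pi> \<epsilon>) (A \<epsilon>) pol) i (\<lambda>q. of_real \<epsilon> * cinner \<theta> q)) / \<epsilon> \<le> max C (1 + M0)"
        if i: "i = 2 \<or> i = 3" for i
      proof -
        have eu: "measure_pmf.expectation (step_dist (\<pi> \<epsilon>) (A \<epsilon>) pol) (\<lambda>x. real (U i x)) = \<epsilon>"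
          using f i by auto
        have "cmod (Eu (step_dist (\<pi> \<epsilon>) (A \<epsilon>) pol) i (\<lambda>q. of_real \<epsilon> * cinner \<theta> q)) \<le> \<epsilon> + \<epsilon> * M0"
          unfolding Eu_alt M0_def
          by (rule E_u_single(2)[of _ "\<pi> \<epsilon>" \<epsilon> K N "cinner \<theta>" C C4 "U i"])
             (use f ep K0 N0 R Ule eu in auto)
        then have "cmod (Eu (step_dist (\<pi> \<epsilon>) (A \<epsilon>) pol) i (\<lambda>q. of_real \<epsilon> * cinner \<theta> q)) / \<epsilon> \<le> 1 + M0"
          using ep by (simp add: field_simps)
        then show ?thesis by linarith
      qed
      show "cmod (Eu (step_dist (\<pi> \<epsilon>) (A \<epsilon>) pol) 2 (\<lambda>q. of_real \<epsilon> * cinner \<theta> q)) / \<epsilon> \<le> max C (1 + M0)"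
        by (rule b) simp
      show "cmod (Eu (step_dist (\<pi> \<epsilon>) (A \<epsilon>) pol) 3 (\<lambda>q. of_real \<epsilon> * cinner \<theta> q)) / \<epsilon> \<le> max C (1 + M0)"
        by (rule b) simp
    qed
  qed
  have L1: "((\<lambda>\<epsilon>. Eexp (\<pi> \<epsilon>) (\<lambda>q. of_real \<epsilon> * cinner \<theta>t q)
           - Eexp (\<pi> \<epsilon>) (\<lambda>q. of_real \<epsilon> * cinner (projC \<theta>t) q)) \<longlongrightarrow> 0) (at_right 0)"
  proof (rule lim_lin[of _ M0])
    fix \<epsilon> :: real assume ep: "0 < \<epsilon>" "\<epsilon> < \<epsilon>1"
    note f = facts[OF ep]
    show "norm (Eexp (\<pi> \<epsilon>) (\<lambda>q. of_real \<epsilon> * cinner \<theta>t q)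
           - Eexp (\<pi> \<epsilon>) (\<lambda>q. of_real \<epsilon> * cinner (projC \<theta>t) q)) \<le> \<epsilon> * M0"
      unfolding M0_def
      by (rule E_pair[of \<epsilon> K N "cinner \<theta>t" "cinner (projC \<theta>t)" "\<pi> \<epsilon>" C C4]) (use f ep K0 N0 Rt Rp D1 in auto)
  qed
  have L2: "((\<lambda>\<epsilon>. Eexp (\<pi> \<epsilon>) (\<lambda>q. of_real \<epsilon> * cinner (projC \<theta>t) q)
           - Eexp (\<pi> \<epsilon>) (\<lambda>q. of_real \<epsilon> * ((2 * \<phi> $ 1 + \<phi> $ 2) * of_nat (q $ 2)
                                       + (\<phi> $ 1 + 2 * \<phi> $ 2) * of_nat (q $ 3))))
       \<longlongrightarrow> 0) (at_right 0)"
  proof (rule lim_lin[of _ M0])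
    fix \<epsilon> :: real assume ep: "0 < \<epsilon>" "\<epsilon> < \<epsilon>1"
    note f = facts[OF ep]
    show "norm (Eexp (\<pi> \<epsilon>) (\<lambda>q. of_real \<epsilon> * cinner (projC \<theta>t) q)
           - Eexp (\<pi> \<epsilon>) (\<lambda>q. of_real \<epsilon> * ((2 * \<phi> $ 1 + \<phi> $ 2) * of_nat (q $ 2)
                                       + (\<phi> $ 1 + 2 * \<phi> $ 2) * of_nat (q $ 3)))) \<le> \<epsilon> * M0"
      unfolding M0_def
      by (rule E_pair[of \<epsilon> K N "cinner (projC \<theta>t)" "\<lambda>q. (2 * \<phi> $ 1 + \<phi> $ 2) * of_nat (q $ 2)
                                       + (\<phi> $ 1 + 2 * \<phi> $ 2) * of_nat (q $ 3)" "\<pi> \<epsilon>" C C4])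
         (use f ep K0 N0 Rp RP D2 in auto)
  qed
  have Lu: "(((\<lambda>\<epsilon>. (Eu (step_dist (\<pi> \<epsilon>) (A \<epsilon>) pol) i (\<lambda>q. of_real \<epsilon> * g1 q)
            - Eu (step_dist (\<pi> \<epsilon>) (A \<epsilon>) pol) i (\<lambda>q. of_real \<epsilon> * g2 q)) / of_real \<epsilon>)
       \<longlongrightarrow> 0) (at_right 0))"
    if i: "i = 2 \<or> i = 3" and r1: "\<And>q. Re (g1 q) \<le> K * N q" and r2: "\<And>q. Re (g2 q) \<le> K * N q"
      and dg: "\<And>x. U i x \<noteq> 0 \<Longrightarrow> cmod (g1 (fst x) - g2 (fst x)) \<le> K * N (fst x)" for i g1 g2
  proof (rule lim_sqrt[of _ M1])
    fix \<epsilon> :: real assume ep: "0 < \<epsilon>" "\<epsilon> < \<epsilon>1"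
    note f = facts[OF ep]
    have eu: "measure_pmf.expectation (step_dist (\<pi> \<epsilon>) (A \<epsilon>) pol) (\<lambda>x. real (U i x)) = \<epsilon>"
      using f i by auto
    have "cmod (Eu (step_dist (\<pi> \<epsilon>) (A \<epsilon>) pol) i (\<lambda>q. of_real \<epsilon> * g1 q)
            - Eu (step_dist (\<pi> \<epsilon>) (A \<epsilon>) pol) i (\<lambda>q. of_real \<epsilon> * g2 q)) \<le> \<epsilon> * (sqrt \<epsilon> * M1)"
      unfolding Eu_alt M1_def
      by (rule E_u_pair[of _ "\<pi> \<epsilon>" \<epsilon> K N g1 g2 "U i" C C4]) (use f ep K0 N0 r1 r2 dg Ule eu in auto)
    then show "norm ((Eu (step_dist (\<pi> \<epsilon>) (A \<epsilon>) pol) i (\<lambda>q. of_real \<epsilon> * g1 q)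
            - Eu (step_dist (\<pi> \<epsilon>) (A \<epsilon>) pol) i (\<lambda>q. of_real \<epsilon> * g2 q)) / of_real \<epsilon>) \<le> sqrt \<epsilon> * M1"
      by (rule div_eps[OF ep(1)])
  qed
  have L3: "(((\<lambda>\<epsilon>. (Eu (step_dist (\<pi> \<epsilon>) (A \<epsilon>) pol) 2 (\<lambda>q. of_real \<epsilon> * cinner \<theta>t q)
            - Eu (step_dist (\<pi> \<epsilon>) (A \<epsilon>) pol) 2 (\<lambda>q. of_real \<epsilon> * cinner (projC \<theta>t) q)) / of_real \<epsilon>)
       \<longlongrightarrow> 0) (at_right 0))"
    by (rule Lu) (use Rt Rp D1 in auto)
  have L5: "(((\<lambda>\<epsilon>. (Eu (step_dist (\<pi> \<epsilon>) (A \<epsilon>) pol) 3 (\<lambda>q. of_real \<epsilon> * cinner \<theta>t q)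
            - Eu (step_dist (\<pi> \<epsilon>) (A \<epsilon>) pol) 3 (\<lambda>q. of_real \<epsilon> * cinner (projC \<theta>t) q)) / of_real \<epsilon>)
       \<longlongrightarrow> 0) (at_right 0))"
    by (rule Lu) (use Rt Rp D1 in auto)
  have L4: "(((\<lambda>\<epsilon>. (Eu (step_dist (\<pi> \<epsilon>) (A \<epsilon>) pol) 2 (\<lambda>q. of_real \<epsilon> * cinner (projC \<theta>t) q)
            - Eu (step_dist (\<pi> \<epsilon>) (A \<epsilon>) pol) 2
                (\<lambda>q. of_real \<epsilon> * (\<phi> $ 1 + 2 * \<phi> $ 2) * of_nat (q $ 3))) / of_real \<epsilon>)
       \<longlongrightarrow> 0) (at_right 0))"
  proof -
    have "(((\<lambda>\<epsilon>. (Eu (step_dist (\<pi> \<epsilon>) (A \<epsilon>) pol) 2 (\<lambda>q. of_real \<epsilon> * cinner (projC \<theta>t) q)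
            - Eu (step_dist (\<pi> \<epsilon>) (A \<epsilon>) pol) 2
                (\<lambda>q. of_real \<epsilon> * ((\<phi> $ 1 + 2 * \<phi> $ 2) * of_nat (q $ 3)))) / of_real \<epsilon>)
       \<longlongrightarrow> 0) (at_right 0))"
      by (rule Lu) (use Rp R2 D3 U2 in auto)
    then show ?thesis by (simp add: mult.assoc)
  qed
  have L6: "(((\<lambda>\<epsilon>. (Eu (step_dist (\<pi> \<epsilon>) (A \<epsilon>) pol) 3 (\<lambda>q. of_real \<epsilon> * cinner (projC \<theta>t) q)
            - Eu (step_dist (\<pi> \<epsilon>) (A \<epsilon>) pol) 3
                (\<lambda>q. of_real \<epsilon> * (2 * \<phi> $ 1 + \<phi> $ 2) * of_nat (q $ 2))) / of_real \<epsilon>)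
       \<longlongrightarrow> 0) (at_right 0))"
  proof -
    have "(((\<lambda>\<epsilon>. (Eu (step_dist (\<pi> \<epsilon>) (A \<epsilon>) pol) 3 (\<lambda>q. of_real \<epsilon> * cinner (projC \<theta>t) q)
            - Eu (step_dist (\<pi> \<epsilon>) (A \<epsilon>) pol) 3
                (\<lambda>q. of_real \<epsilon> * ((2 * \<phi> $ 1 + \<phi> $ 2) * of_nat (q $ 2)))) / of_real \<epsilon>)
       \<longlongrightarrow> 0) (at_right 0))"
      by (rule Lu) (use Rp R3 D4 U3 in auto)
    then show ?thesis by (simp add: mult.assoc)
  qed
  have P1: "\<forall>\<theta>\<in>{\<theta>t, projC \<theta>t}.
        eventually (\<lambda>\<epsilon>. integrable (measure_pmf (\<pi> \<epsilon>)) (\<lambda>q. exp (of_real \<epsilon> * cinner \<theta> q)))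
          (at_right 0)
      \<and> (\<exists>C. eventually (\<lambda>\<epsilon>.
             cmod (Eexp (\<pi> \<epsilon>) (\<lambda>q. of_real \<epsilon> * cinner \<theta> q)) \<le> C
           \<and> cmod (Eu (step_dist (\<pi> \<epsilon>) (A \<epsilon>) pol) 2 (\<lambda>q. of_real \<epsilon> * cinner \<theta> q)) / \<epsilon> \<le> C
           \<and> cmod (Eu (step_dist (\<pi> \<epsilon>) (A \<epsilon>) pol) 3 (\<lambda>q. of_real \<epsilon> * cinner \<theta> q)) / \<epsilon> \<le> C)
          (at_right 0))"
    using part1[OF Rt] part1[OF Rp] by blast
  show ?thesis using P1 L1 L2 L3 L4 L5 L6 by blast
qed


end
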